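(* Let $\mathcal{X}$ and $\mathcal{Y}$ be finite sets, let $\mathcal{M}\subseteq\mathcal{X}\times\mathcal{Y}$ be the set of actual matches, and let $\hat{\mathcal{M}}_H\subseteq\mathcal{X}\times\mathcal{Y}$ be a fixed set (matches identified by a holdout query algorithm, chosen independently of all samples below). Let $\mathcal{S}_{\mathcal{X}}$ and $\mathcal{S}'_{\mathcal{X}}$ be independent samples, each drawn uniformly at random without replacement from $\mathcal{X}$. Let $\hat{\mathcal{M}}\subseteq\mathcal{X}\times\mathcal{Y}$ be a set of identified matches (produced by a "complete" query algorithm) which may depend on $\mathcal{S}_{\mathcal{X}}$ but is independent of $\mathcal{S}'_{\mathcal{X}}$ given $\mathcal{S}_{\mathcal{X}}$ (i.e. it is a fixed set conditional on $\mathcal{S}_{\mathcal{X}}$). For $x\in\mathcal{X}$ let $\mathcal{M}(x)$, $\hat{\mathcal{M}}(x)$, $\hat{\mathcal{M}}_H(x)$ be the sets of pairs in $\mathcal{M}$, $\hat{\mathcal{M}}$, $\hat{\mathcal{M}}_H$ respectively whose first coordinate is $x$. Let $\mathcal{X}'=\{x\in\mathcal{X}:\mathcal{M}(x)\ne\emptyset\}$, and for $x\in\mathcal{X}'$ let $r_H(x)=|\hat{\mathcal{M}}_H(x)\cap\mathcal{M}(x)|/|\mathcal{M}(x)|$ and $r(x)=|\hat{\mathcal{M}}(x)\cap\mathcal{M}(x)|/|\mathcal{M}(x)|$; define the query recall $R=\frac{1}{|\mathcal{X}'|}\sum_{x\in\mathcal{X}'}r(x)$. Let $d_r(x)=\mathbf{1}\{\hat{\mathcal{M}}_H(x)\setminus\hat{\mathcal{M}}(x)\ne\emptyset\}$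 for $x\in\mathcal{X}$. Then for any $\delta>0$, with probability at least $1-3\delta$, $$R\ \ge\ p^-(\mathcal{X}',\mathcal{S}_{\mathcal{X}}\cap\mathcal{X}',r_H,0,1,\delta)-\frac{p^+(\mathcal{X},\mathcal{S}'_{\mathcal{X}},d_r,0,1,\delta)}{p^-(\mathcal{X},\mathcal{S}_{\mathcal{X}},\mathbf{1}_{\mathcal{X}'},0,1,\delta)}.$$
   Context: PAC bound rules: $p^+$ and $p^-$ are functions which, given a finite set $\mathcal{P}$ (population), a subset $\mathcal{S}\subseteq\mathcal{P}$, a function $f:\mathcal{P}\to\mathbb{R}$, reals $a\le b$ and $\delta>0$, return a real number, and satisfy the following: for every finite set $\mathcal{P}$ with $|\mathcal{P}|=n$, every sample size $s$, and every $f$ with $a\le f(x)\le b$ for all $x\in\mathcal{P}$, if $\mathcal{S}$ is a size-$s$ sample drawn uniformly at random without replacement from $\mathcal{P}$ and $\mu=\frac1n\sum_{x\in\mathcal{P}}f(x)$, then $\Pr\{\mu>p^+(\mathcal{P},\mathcal{S},f,a,b,\delta)\}\le\delta$ and $\Pr\{\mu<p^-(\mathcal{P},\mathcal{S},f,a,b,\delta)\}\le\delta$. $\mathbf{1}_{A}$ denotes the indicator function of a set $A$ and $\mathbf{1}\{\cdot\}$ the indicator of an event. *)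

theory Defs
  imports "HOL-Probability.Probability"
begin

text \<open>All size-s subsets of a population P (uniform sampling without replacement
 = uniform distribution on this set).\<close>
definition samples :: "'a set \<Rightarrow> nat \<Rightarrow> 'a set set" where
  "samples P s = {S. S \<subseteq> P \<and> card S = s}"

definition pop_mean :: "'a set \<Rightarrow> ('a \<Rightarrow> real) \<Rightarrow> real" where
  "pop_mean P f = (\<Sum>x\<in>P. f x) / real (card P)"

definition pac_upper ::
  "('a set \<Rightarrow> 'a set \<Rightarrow> ('a \<Rightarrow> real) \<Rightarrow> real \<Rightarrow> real \<Rightarrow> real \<Rightarrow> real) \<Rightarrow> bool" where
  "pac_upper p \<longleftrightarrow>
     (\<forall>P s f a b \<delta>. finite P \<and> s \<le> card P \<and> a \<le> b \<and> \<delta> > 0 \<and>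
        (\<forall>x\<in>P. a \<le> f x \<and> f x \<le> b) \<longrightarrow>
        measure_pmf.prob (pmf_of_set (samples P s))
          {S. pop_mean P f > p P S f a b \<delta>} \<le> \<delta>)"

definition pac_lower ::
  "('a set \<Rightarrow> 'a set \<Rightarrow> ('a \<Rightarrow> real) \<Rightarrow> real \<Rightarrow> real \<Rightarrow> real \<Rightarrow> real) \<Rightarrow> bool" where
  "pac_lower p \<longleftrightarrow>
     (\<forall>P s f a b \<delta>. finite P \<and> s \<le> card P \<and> a \<le> b \<and> \<delta> > 0 \<and>
        (\<forall>x\<in>P. a \<le> f x \<and> f x \<le> b) \<longrightarrow>
        measure_pmf.prob (pmf_of_set (samples P s))
          {S. pop_mean P f < p P S f a b \<delta>} \<le> \<delta>)"

definition row :: "('a \<times> 'b) set \<Rightarrow> 'a \<Rightarrow> ('a \<times> 'b) set" where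
  "row M x = {q \<in> M. fst q = x}"

definition rowrecall :: "('a \<times> 'b) set \<Rightarrow> ('a \<times> 'b) set \<Rightarrow> 'a \<Rightarrow> real" where
  "rowrecall N M x = real (card (row N x \<inter> row M x)) / real (card (row M x))"

definition query_recall :: "'a set \<Rightarrow> ('a \<times> 'b) set \<Rightarrow> ('a \<times> 'b) set \<Rightarrow> real" where
  "query_recall X N M =
     (let X' = {x \<in> X. row M x \<noteq> {}} in (\<Sum>x\<in>X'. rowrecall N M x) / real (card X'))"

end

theory Submission imports Defs begin

lemma samples_card:
  assumes "finite P" shows "card (samples P k) = card P choose k"
  unfolding samples_def using n_subsets[OF assms] by simp

lemma samples_finite: "finite P \<Longrightarrow> finite (samples P k)"
  unfolding samples_def by (rule finite_subset[of _ "Pow P"]) auto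

lemma samples_ne: "finite P \<Longrightarrow> k \<le> card P \<Longrightarrow> samples P k \<noteq> {}"
  using samples_card[of P k] by (metis card.empty zero_less_binomial_iff less_numeral_extra(3))

lemma pac_lower_card:
  assumes "pac_lower p" "finite P" "k \<le> card P" "a \<le> b" "\<delta> > 0" "\<forall>x\<in>P. a \<le> f x \<and> f x \<le> b"
  shows "real (card {T\<in>samples P k. pop_mean P f < p P T f a b \<delta>}) \<le> \<delta> * real (card (samples P k))"
proof -
  have pr: "measure_pmf.prob (pmf_of_set (samples P k)) {T. pop_mean P f < p P T f a b \<delta>} \<le> \<delta>"
    using assms unfolding pac_lower_def by blast
  have fin: "finite (samples P k)" and ne: "samples P k \<noteq> {}"
    using samples_finite samples_ne assms by auto
  have cpos: "real (card (samples P k)) > 0" using fin ne by (simp add: card_gt_0_iff)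
  have eq: "samples P k \<inter> {T. pop_mean P f < p P T f a b \<delta>} = {T\<in>samples P k. pop_mean P f < p P T f a b \<delta>}" by auto
  from pr show ?thesis
    using cpos by (simp add: measure_pmf_of_set[OF ne fin] eq divide_le_eq)
qed

lemma pac_upper_card:
  assumes "pac_upper p" "finite P" "k \<le> card P" "a \<le> b" "\<delta> > 0" "\<forall>x\<in>P. a \<le> f x \<and> f x \<le> b"
  shows "real (card {T\<in>samples P k. pop_mean P f > p P T f a b \<delta>}) \<le> \<delta> * real (card (samples P k))"
proof -
  have pr: "measure_pmf.prob (pmf_of_set (samples P k)) {T. pop_mean P f > p P T f a b \<delta>} \<le> \<delta>"
    using assms unfolding pac_upper_def by blast
  have fin: "finite (samples P k)" and ne: "samples P k \<noteq> {}"
    using samples_finite samples_ne assms by auto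
  have cpos: "real (card (samples P k)) > 0" using fin ne by (simp add: card_gt_0_iff)
  have eq: "samples P k \<inter> {T. pop_mean P f > p P T f a b \<delta>} = {T\<in>samples P k. pop_mean P f > p P T f a b \<delta>}" by auto
  from pr show ?thesis
    using cpos by (simp add: measure_pmf_of_set[OF ne fin] eq divide_le_eq)
qed

lemma fiber_card:
  assumes "finite X" "X' \<subseteq> X" "T \<subseteq> X'"
  shows "card {S\<in>samples X s. S \<inter> X' = T} =
         (if card T \<le> s then card (X - X') choose (s - card T) else 0)"
proof (cases "card T \<le> s")
  case True
  have finT: "finite T" using assms finite_subset by blast
  have "bij_betw (\<lambda>S. S - X') {S\<in>samples X s. S \<inter> X' = T} {U. U \<subseteq> X - X' \<and> card U = s - card T}"
  proof (rule bij_betw_byWitness[where f'="\<lambda>U. T \<union> U"])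
    show "\<forall>a\<in>{S \<in> samples X s. S \<inter> X' = T}. T \<union> (a - X') = a" by auto
    show "\<forall>a'\<in>{U. U \<subseteq> X - X' \<and> card U = s - card T}. T \<union> a' - X' = a'" using assms by auto
    show "(\<lambda>S. S - X') ` {S \<in> samples X s. S \<inter> X' = T} \<subseteq> {U. U \<subseteq> X - X' \<and> card U = s - card T}"
    proof clarify
      fix S assume S: "S \<in> samples X s" "T = S \<inter> X'"
      have fS: "finite S" using S assms unfolding samples_def using finite_subset by blast
      show "S - X' \<subseteq> X - X' \<and> card (S - X') = s - card (S \<inter> X')"
        using S fS unfolding samples_def by (auto simp: card_Diff_subset_Int)
    qed
    show "(\<lambda>U. T \<union> U) ` {U. U \<subseteq> X - X' \<and> card U = s - card T} \<subseteq> {S \<in> samples X s. S \<inter> X' = T}"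
    proof clarify
      fix U assume U: "U \<subseteq> X - X'" "card U = s - card T"
      have fU: "finite U" using U assms finite_subset by blast
      have "card (T \<union> U) = card T + card U"
        using U assms by (intro card_Un_disjoint finT fU) auto
      then show "T \<union> U \<in> samples X s \<and> (T \<union> U) \<inter> X' = T"
        using U assms True unfolding samples_def by auto
    qed
  qed
  then have "card {S\<in>samples X s. S \<inter> X' = T} = card {U. U \<subseteq> X - X' \<and> card U = s - card T}"
    by (rule bij_betw_same_card)
  also have "\<dots> = card (X - X') choose (s - card T)"
    using assms by (intro n_subsets) auto
  finally show ?thesis using True by simp
next
  case False
  have "{S\<in>samples X s. S \<inter> X' = T} = {}"
  proof (rule ccontr)
    assume "{S\<in>samples X s. S \<inter> X' = T} \<noteq> {}"
    then obtain S where S: "S \<in> samples X s" "S \<inter> X' = T" by blast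
    have fS: "finite S" using S assms unfolding samples_def using finite_subset by blast
    have "card T \<le> card S" using S fS by (metis card_mono inf_le1)
    then show False using S False unfolding samples_def by auto
  qed
  note e = this
  show ?thesis unfolding e using False by simp
qed


lemma sum_by_card:
  assumes "finite P"
  shows "(\<Sum>T\<in>{T. T \<subseteq> P \<and> Q T}. g T) = (\<Sum>k\<le>card P. \<Sum>T\<in>{T\<in>samples P k. Q T}. g T)"
proof -
  have fin: "finite {T. T \<subseteq> P \<and> Q T}" by (rule finite_subset[of _ "Pow P"]) (auto simp: assms)
  have im: "card ` {T. T \<subseteq> P \<and> Q T} \<subseteq> {..card P}" using assms by (auto intro: card_mono)
  have "(\<Sum>T\<in>{T. T \<subseteq> P \<and> Q T}. g T) = (\<Sum>k\<le>card P. \<Sum>T\<in>{x \<in> {T. T \<subseteq> P \<and> Q T}. card x = k}. g T)"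
    using sum.group[OF fin _ im, of g] by simp
  also have "\<dots> = (\<Sum>k\<le>card P. \<Sum>T\<in>{T\<in>samples P k. Q T}. g T)"
    by (intro sum.cong refl) (auto simp: samples_def)
  finally show ?thesis .
qed

lemma conditioning:
  assumes "finite X" "X' \<subseteq> X" "\<delta> \<ge> 0"
    and bnd: "\<And>k. k \<le> card X' \<Longrightarrow> real (card {T\<in>samples X' k. bad T}) \<le> \<delta> * real (card (samples X' k))"
  shows "real (card {S\<in>samples X s. bad (S \<inter> X')}) \<le> \<delta> * real (card (samples X s))"
proof -
  define h where "h k = (if k \<le> s then card (X - X') choose (s - k) else 0)" for k
  have fX': "finite X'" using assms finite_subset by blast
  have finS: "finite (samples X s)" using samples_finite assms by blast
  have c: "card {S\<in>samples X s. S \<inter> X' = T} = h (card T)" if "T \<subseteq> X'" for T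
    using fiber_card[OF assms(1,2) that] unfolding h_def by simp
  have part: "card {S\<in>samples X s. Q (S \<inter> X')} = (\<Sum>T\<in>{T. T \<subseteq> X' \<and> Q T}. h (card T))" for Q
  proof -
    have eq: "{S\<in>samples X s. Q (S \<inter> X')} = (\<Union>T\<in>{T. T \<subseteq> X' \<and> Q T}. {S\<in>samples X s. S \<inter> X' = T})"
      by auto
    have "card (\<Union>T\<in>{T. T \<subseteq> X' \<and> Q T}. {S\<in>samples X s. S \<inter> X' = T})
          = (\<Sum>T\<in>{T. T \<subseteq> X' \<and> Q T}. card {S\<in>samples X s. S \<inter> X' = T})"
      by (rule card_UN_disjoint) (use fX' finS in \<open>auto intro: finite_subset[of _ "Pow X'"]\<close>)
    also have "\<dots> = (\<Sum>T\<in>{T. T \<subseteq> X' \<and> Q T}. h (card T))"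
      by (intro sum.cong refl) (simp add: c)
    finally show ?thesis using eq by simp
  qed
  have "real (card {S\<in>samples X s. bad (S \<inter> X')}) = (\<Sum>T\<in>{T. T \<subseteq> X' \<and> bad T}. real (h (card T)))"
    by (simp add: part)
  also have "\<dots> = (\<Sum>k\<le>card X'. \<Sum>T\<in>{T\<in>samples X' k. bad T}. real (h (card T)))"
    by (rule sum_by_card[OF fX'])
  also have "\<dots> = (\<Sum>k\<le>card X'. real (h k) * real (card {T\<in>samples X' k. bad T}))"
    by (intro sum.cong refl) (auto simp: samples_def)
  also have "\<dots> \<le> (\<Sum>k\<le>card X'. real (h k) * (\<delta> * real (card (samples X' k))))"
    by (intro sum_mono mult_left_mono bnd) auto
  also have "\<dots> = \<delta> * (\<Sum>k\<le>card X'. \<Sum>T\<in>{T\<in>samples X' k. True}. real (h (card T)))"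
    by (simp add: sum_distrib_left samples_def mult_ac)
  also have "\<dots> = \<delta> * (\<Sum>T\<in>{T. T \<subseteq> X' \<and> True}. real (h (card T)))"
    by (simp only: sum_by_card[OF fX', symmetric])
  also have "\<dots> = \<delta> * real (card {S\<in>samples X s. True})"
    using part[of "\<lambda>_. True"] by (simp only: of_nat_sum)
  finally show ?thesis by simp
qed


lemma pair_of_set:
  assumes "finite A" "A \<noteq> {}" "finite B" "B \<noteq> {}"
  shows "pair_pmf (pmf_of_set A) (pmf_of_set B) = pmf_of_set (A \<times> B)"
proof (rule pmf_eqI)
  fix z :: "'a \<times> 'b"
  obtain a b where z: "z = (a, b)" by (cases z)
  show "pmf (pair_pmf (pmf_of_set A) (pmf_of_set B)) z = pmf (pmf_of_set (A \<times> B)) z"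
    using assms by (auto simp: z pmf_pair indicator_def card_cartesian_product)
qed

lemma row_finite:
  assumes "finite X" "finite Y" "M \<subseteq> X \<times> Y" shows "finite (row M x)"
proof -
  have "finite M" using assms finite_subset by blast
  then show ?thesis unfolding row_def by simp
qed

lemma rowrecall_bounds:
  assumes "finite X" "finite Y" "M \<subseteq> X \<times> Y"
  shows "0 \<le> rowrecall N M x \<and> rowrecall N M x \<le> 1"
proof -
  have f: "finite (row M x)" by (rule row_finite[OF assms])
  have "card (row N x \<inter> row M x) \<le> card (row M x)" using f by (intro card_mono) auto
  then show ?thesis unfolding rowrecall_def by (auto simp: divide_le_eq_1)
qed

lemma det:
  fixes X :: "'a set" and Y :: "'b set" and M MH N :: "('a \<times> 'b) set"
  assumes "finite X" "finite Y" "M \<subseteq> X \<times> Y"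
    and Xp: "Xp = {x \<in> X. row M x \<noteq> {}}" "Xp \<noteq> {}"
    and dr: "dr = (\<lambda>x. if row MH x - row N x \<noteq> {} then 1 else 0 :: real)"
    and h1: "pop_mean Xp (rowrecall MH M) \<ge> L"
    and h2: "pop_mean X dr \<le> U"
    and h3: "pop_mean X (\<lambda>x. if x \<in> Xp then 1 else 0) \<ge> den" and dpos: "den > 0"
  shows "query_recall X N M \<ge> L - U / den"
proof -
  have XpX: "Xp \<subseteq> X" using Xp by auto
  have fXp: "finite Xp" using XpX assms finite_subset by blast
  define m where "m = real (card Xp)"
  define n where "n = real (card X)"
  have mpos: "m > 0" using fXp Xp unfolding m_def by (simp add: card_gt_0_iff)
  have mn: "m \<le> n" unfolding m_def n_def using card_mono[OF assms(1) XpX] by simp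
  have npos: "n > 0" using mpos mn by simp
  have pt: "rowrecall MH M x - rowrecall N M x \<le> dr x" if x: "x \<in> Xp" for x
  proof (cases "row MH x - row N x = {}")
    case True
    have f: "finite (row M x)" by (rule row_finite[OF assms(1-3)])
    have "card (row MH x \<inter> row M x) \<le> card (row N x \<inter> row M x)"
      using True f by (intro card_mono) auto
    then have "rowrecall MH M x \<le> rowrecall N M x"
      unfolding rowrecall_def by (simp add: divide_right_mono)
    then show ?thesis using True dr by simp
  next
    case False
    then show ?thesis using rowrecall_bounds[OF assms(1-3), of MH x] rowrecall_bounds[OF assms(1-3), of N x] dr
      by simp
  qed
  define D where "D = (\<Sum>x\<in>X. dr x)"
  have drnn: "dr x \<ge> 0" for x using dr by simp
  have "(\<Sum>x\<in>Xp. rowrecall MH M x) - (\<Sum>x\<in>Xp. rowrecall N M x) \<le> (\<Sum>x\<in>Xp. dr x)"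
    using pt by (simp add: sum_subtractf[symmetric] sum_mono)
  also have "\<dots> \<le> D" unfolding D_def using drnn assms(1) XpX by (intro sum_mono2) auto
  finally have key: "(\<Sum>x\<in>Xp. rowrecall MH M x) - D \<le> (\<Sum>x\<in>Xp. rowrecall N M x)" by simp
  have Dnn: "D \<ge> 0" unfolding D_def using drnn by (simp add: sum_nonneg)
  have ind: "(\<Sum>x\<in>X. if x \<in> Xp then 1 else 0 :: real) = m"
    unfolding m_def using assms(1) XpX by (simp add: sum.If_cases Int_absorb1)
  have h3': "den \<le> m / n" using h3 ind unfolding pop_mean_def n_def by simp
  have h2': "D / n \<le> U" using h2 unfolding pop_mean_def D_def n_def by simp
  have h1': "L \<le> (\<Sum>x\<in>Xp. rowrecall MH M x) / m" using h1 unfolding pop_mean_def m_def by simp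
  have "D / m = (D / n) * (n / m)" using npos mpos by simp
  also have "\<dots> \<le> (D / n) * (1 / den)"
  proof (intro mult_left_mono)
    show "n / m \<le> 1 / den" using h3' dpos npos mpos by (simp add: field_simps)
    show "0 \<le> D / n" using Dnn npos by simp
  qed
  also have "\<dots> = (D / n) / den" by simp
  also have "\<dots> \<le> U / den" using h2' dpos by (intro divide_right_mono) auto
  finally have DU: "D / m \<le> U / den" .
  have "L - U / den \<le> (\<Sum>x\<in>Xp. rowrecall MH M x) / m - D / m" using h1' DU by simp
  also have "\<dots> = ((\<Sum>x\<in>Xp. rowrecall MH M x) - D) / m" by (simp add: diff_divide_distrib)
  also have "\<dots> \<le> (\<Sum>x\<in>Xp. rowrecall N M x) / m" using key mpos by (simp add: divide_right_mono)
  also have "\<dots> = query_recall X N M" unfolding query_recall_def Let_def Xp(1)[symmetric] m_def by simp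
  finally show ?thesis .
qed


lemma aux_count:
  assumes "finite C" "C - G \<subseteq> E1 \<union> E2 \<union> E3" "finite E1" "finite E2" "finite E3"
  shows "card C \<le> card (C \<inter> G) + card E1 + card E2 + card E3"
proof -
  have "C \<subseteq> (C \<inter> G) \<union> E1 \<union> E2 \<union> E3" using assms(2) by blast
  then have "card C \<le> card ((C \<inter> G) \<union> E1 \<union> E2 \<union> E3)"
    using assms by (intro card_mono) auto
  also have "\<dots> \<le> card ((C \<inter> G) \<union> E1 \<union> E2) + card E3" by (rule card_Un_le)
  also have "\<dots> \<le> card ((C \<inter> G) \<union> E1) + card E2 + card E3" using card_Un_le by simp
  also have "\<dots> \<le> card (C \<inter> G) + card E1 + card E2 + card E3" using card_Un_le by simp
  finally show ?thesis .
qed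

theorem theorem5:
  fixes X :: "'a set" and Y :: "'b set"
    and M MH :: "('a \<times> 'b) set"
    and Mhat :: "'a set \<Rightarrow> ('a \<times> 'b) set"
    and pplus pminus :: "'a set \<Rightarrow> 'a set \<Rightarrow> ('a \<Rightarrow> real) \<Rightarrow> real \<Rightarrow> real \<Rightarrow> real \<Rightarrow> real"
    and s s' :: nat and \<delta> :: real
  assumes "finite X" and "finite Y"
    and "M \<subseteq> X \<times> Y" and "MH \<subseteq> X \<times> Y"
    and "\<And>S. Mhat S \<subseteq> X \<times> Y"
    and "{x \<in> X. row M x \<noteq> {}} \<noteq> {}"
    and "s \<le> card X" and "s' \<le> card X"
    and "pac_upper pplus" and "pac_lower pminus"
    and "\<delta> > 0"
  shows "measure_pmf.prob
           (pair_pmf (pmf_of_set (samples X s)) (pmf_of_set (samples X s')))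
           {(S, S'). let X' = {x \<in> X. row M x \<noteq> {}};
                         dr = (\<lambda>x. if row MH x - row (Mhat S) x \<noteq> {} then 1 else 0 :: real);
                         den = pminus X S (\<lambda>x. if x \<in> X' then 1 else 0) 0 1 \<delta>
                     in den > 0 \<longrightarrow>
                        query_recall X (Mhat S) M
                          \<ge> pminus X' (S \<inter> X') (rowrecall MH M) 0 1 \<delta>
                             - pplus X S' dr 0 1 \<delta> / den}
         \<ge> 1 - 3 * \<delta>"
  (is "measure_pmf.prob _ ?G \<ge> _")
proof -
  obtain G where G: "G = ?G" by blast
  define A where "A = samples X s"
  define B where "B = samples X s'"
  define Xp where "Xp = {x \<in> X. row M x \<noteq> {}}"
  define rH where "rH = rowrecall MH M"
  define ind where "ind = (\<lambda>x. if x \<in> Xp then 1 else 0 :: real)"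
  define dr where "dr = (\<lambda>S x. if row MH x - row (Mhat S) x \<noteq> {} then 1 else 0 :: real)"
  define bad1 where "bad1 = (\<lambda>T. pop_mean Xp rH < pminus Xp T rH 0 1 \<delta>)"
  define bad2 where "bad2 = (\<lambda>S S'. pop_mean X (dr S) > pplus X S' (dr S) 0 1 \<delta>)"
  define bad3 where "bad3 = (\<lambda>S. pop_mean X ind < pminus X S ind 0 1 \<delta>)"
  have fA: "finite A" and nA: "A \<noteq> {}" and fB: "finite B" and nB: "B \<noteq> {}"
    unfolding A_def B_def using samples_finite samples_ne assms by auto
  have XpX: "Xp \<subseteq> X" unfolding Xp_def by auto
  have fXp: "finite Xp" using XpX assms finite_subset by blast
  have good: "(S, S') \<in> ?G" if "\<not> bad1 (S \<inter> Xp)" "\<not> bad2 S S'" "\<not> bad3 S" for S S'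
  proof -
    have "pminus X S ind 0 1 \<delta> > 0 \<longrightarrow> query_recall X (Mhat S) M
            \<ge> pminus Xp (S \<inter> Xp) (rowrecall MH M) 0 1 \<delta> - pplus X S' (dr S) 0 1 \<delta> / pminus X S ind 0 1 \<delta>"
    proof
      assume "pminus X S ind 0 1 \<delta> > 0"
      then show "query_recall X (Mhat S) M
            \<ge> pminus Xp (S \<inter> Xp) (rowrecall MH M) 0 1 \<delta> - pplus X S' (dr S) 0 1 \<delta> / pminus X S ind 0 1 \<delta>"
        using that assms(6)
        by (intro det[where MH=MH and N="Mhat S", OF assms(1-3) Xp_def _ refl])
           (auto simp: bad1_def bad2_def bad3_def rH_def ind_def dr_def Xp_def not_less)
    qed
    then show ?thesis unfolding Xp_def ind_def dr_def Let_def by simp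
  qed
  have sub: "A \<times> B - (A \<times> B \<inter> ?G) \<subseteq>
      {S\<in>A. bad1 (S \<inter> Xp)} \<times> B \<union> Sigma A (\<lambda>S. {S'\<in>B. bad2 S S'}) \<union> {S\<in>A. bad3 S} \<times> B"
    using good by blast
  have fAB: "finite (A \<times> B)" using fA fB by simp
  have c1: "real (card {S\<in>A. bad1 (S \<inter> Xp)}) \<le> \<delta> * real (card A)"
    unfolding A_def
  proof (rule conditioning[OF assms(1) XpX])
    show "0 \<le> \<delta>" using assms by simp
    fix k assume "k \<le> card Xp"
    then show "real (card {T \<in> samples Xp k. bad1 T}) \<le> \<delta> * real (card (samples Xp k))"
      unfolding bad1_def rH_def
      using pac_lower_card[OF assms(10) fXp, of k 0 1 \<delta> "rowrecall MH M"]
        rowrecall_bounds[OF assms(1-3)] assms(11) by auto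
  qed
  have c3: "real (card {S\<in>A. bad3 S}) \<le> \<delta> * real (card A)"
    unfolding A_def bad3_def
    using pac_lower_card[OF assms(10,1,7), of 0 1 \<delta> ind] assms(11) by (auto simp: ind_def)
  have c2: "real (card (Sigma A (\<lambda>S. {S'\<in>B. bad2 S S'}))) \<le> \<delta> * real (card A) * real (card B)"
  proof -
    have "real (card (Sigma A (\<lambda>S. {S'\<in>B. bad2 S S'}))) = (\<Sum>S\<in>A. real (card {S'\<in>B. bad2 S S'}))"
      using fA fB by (simp add: card_SigmaI)
    also have "\<dots> \<le> (\<Sum>S\<in>A. \<delta> * real (card B))"
    proof (rule sum_mono)
      fix S assume "S \<in> A"
      show "real (card {S'\<in>B. bad2 S S'}) \<le> \<delta> * real (card B)"
        unfolding B_def bad2_def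
        using pac_upper_card[OF assms(9,1,8), of 0 1 \<delta> "dr S"] assms(11) by (auto simp: dr_def)
    qed
    also have "\<dots> = \<delta> * real (card A) * real (card B)" by simp
    finally show ?thesis .
  qed
  have fE1: "finite ({S\<in>A. bad1 (S \<inter> Xp)} \<times> B)" using fA fB by simp
  have fE2: "finite (Sigma A (\<lambda>S. {S'\<in>B. bad2 S S'}))" using fA fB by (intro finite_SigmaI) auto
  have fE3: "finite ({S\<in>A. bad3 S} \<times> B)" using fA fB by simp
  have sub': "A \<times> B - ?G \<subseteq>
      {S\<in>A. bad1 (S \<inter> Xp)} \<times> B \<union> Sigma A (\<lambda>S. {S'\<in>B. bad2 S S'}) \<union> {S\<in>A. bad3 S} \<times> B"
    using sub by (simp add: Diff_Int)
  have "card (A \<times> B) \<le> card (A \<times> B \<inter> G) + card ({S\<in>A. bad1 (S \<inter> Xp)} \<times> B) + card (Sigma A (\<lambda>S. {S'\<in>B. bad2 S S'})) + card ({S\<in>A. bad3 S} \<times> B)"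
    by (rule aux_count[OF fAB sub'[folded G] fE1 fE2 fE3])
  then have "real (card (A \<times> B)) \<le> real (card (A \<times> B \<inter> G) + card ({S\<in>A. bad1 (S \<inter> Xp)} \<times> B) + card (Sigma A (\<lambda>S. {S'\<in>B. bad2 S S'})) + card ({S\<in>A. bad3 S} \<times> B))"
    by (simp only: of_nat_le_iff)
  then have "real (card (A \<times> B)) \<le> real (card (A \<times> B \<inter> G)) + (real (card {S\<in>A. bad1 (S \<inter> Xp)}) * real (card B)
      + real (card (Sigma A (\<lambda>S. {S'\<in>B. bad2 S S'}))) + real (card {S\<in>A. bad3 S}) * real (card B))"
    by (simp add: card_cartesian_product)
  also have "\<dots> \<le> real (card (A \<times> B \<inter> G)) + 3 * \<delta> * (real (card A) * real (card B))"
    using c1 c2 c3 mult_right_mono[OF c1, of "real (card B)"] mult_right_mono[OF c3, of "real (card B)"]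
    by (simp add: algebra_simps)
  finally have main: "real (card A) * real (card B) \<le> real (card (A \<times> B \<inter> G)) + 3 * \<delta> * (real (card A) * real (card B))"
    by (simp add: card_cartesian_product)
  have pos: "real (card A) * real (card B) > 0" using fA nA fB nB by (simp add: card_gt_0_iff)
  have "measure_pmf.prob (pair_pmf (pmf_of_set (samples X s)) (pmf_of_set (samples X s'))) G
        = real (card (A \<times> B \<inter> G)) / (real (card A) * real (card B))"
    unfolding A_def[symmetric] B_def[symmetric] pair_of_set[OF fA nA fB nB]
    using fA nA fB nB by (simp add: measure_pmf_of_set card_cartesian_product)
  moreover have "1 - 3 * \<delta> \<le> real (card (A \<times> B \<inter> G)) / (real (card A) * real (card B))"
    using main pos by (simp add: le_divide_eq algebra_simps)
  ultimately show ?thesis unfolding G[symmetric] by simp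
qed

end
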